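(* Let $G=(V,E)$ be the path (chain) graph with $V=\{1,\dots,n\}$, $n\ge 2$, and $E=\{\{i,i+1\}: i=1,\dots,n-1\}$. Let $c\in\mathbb{R}^n$ have strictly positive components and $\rho>0$. For $k=1,\dots,n$ define $s_k=\sum_{1\le i\le k,\ i\equiv k \pmod 2}c_i^2$ (so $s_1=c_1^2$, $s_2=c_2^2$, $s_3=c_1^2+c_3^2$, $s_4=c_2^2+c_4^2$, ...). Then there exist strictly positive edge weights such that the weighted adjacency matrix $A$ satisfies $Ac=\rho c$ if and only if $$s_1<s_2<\dots<s_{n-1}\quad\text{and}\quad s_{n-1}=s_n,$$ i.e. $c_1^2<c_2^2<c_1^2+c_3^2<c_2^2+c_4^2<\dots<\sum_{i \text{ odd}}c_i^2=\sum_{i\text{ even}}c_i^2$.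
   Context: For positive edge weights $w_{ij}=w_{ji}$ ($\{i,j\}\in E$), the weighted adjacency matrix $A$ has $a_{ij}=w_{ij}$ if $\{i,j\}\in E$ and $a_{ij}=0$ otherwise. *)

theory Defs
  imports Complex_Main
begin

definition path_adj :: "nat \<Rightarrow> (nat \<Rightarrow> real) \<Rightarrow> nat \<Rightarrow> nat \<Rightarrow> real" where
  "path_adj n w i j =
     (if 1 \<le> i \<and> i < n \<and> j = i + 1 then w i
      else if 1 \<le> j \<and> j < n \<and> i = j + 1 then w j
      else 0)"

definition alt_sq_sum :: "(nat \<Rightarrow> real) \<Rightarrow> nat \<Rightarrow> real" where
  "alt_sq_sum c k = (\<Sum>i\<in>{i. 1 \<le> i \<and> i \<le> k \<and> i mod 2 = k mod 2}. (c i)^2)"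

end

theory Submission
  imports Defs
begin

lemma row_sum:
  assumes "1 \<le> i" "i \<le> n"
  shows "(\<Sum>j = 1..n. path_adj n w i j * c j) =
    (if i < n then w i * c (i+1) else 0) + (if 2 \<le> i then w (i-1) * c (i-1) else 0)"
proof -
  have "\<And>j. path_adj n w i j * c j =
     (if j = i+1 then (if i < n then w i * c (i+1) else 0) else 0) +
     (if j = i - 1 then (if 2 \<le> i then w (i-1) * c (i-1) else 0) else 0)"
    using assms unfolding path_adj_def by auto
  then have "(\<Sum>j = 1..n. path_adj n w i j * c j) =
     (\<Sum>j = 1..n. (if j = i+1 then (if i < n then w i * c (i+1) else 0) else 0)) +
     (\<Sum>j = 1..n. (if j = i - 1 then (if 2 \<le> i then w (i-1) * c (i-1) else 0) else 0))"
    by (simp add: sum.distrib)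
  also have "\<dots> = (if i < n then w i * c (i+1) else 0) + (if 2 \<le> i then w (i-1) * c (i-1) else 0)"
  proof -
    have a: "(\<Sum>j = 1..n. (if j = i+1 then (if i < n then w i * c (i+1) else 0) else 0))
       = (if i < n then w i * c (i+1) else 0)"
    proof (cases "i < n")
      case True
      then have "i+1 \<in> {1..n}" by simp
      then show ?thesis using True by (simp add: sum.delta')
    qed simp
    have b: "(\<Sum>j = 1..n. (if j = i - 1 then (if 2 \<le> i then w (i-1) * c (i-1) else 0) else 0))
       = (if 2 \<le> i then w (i-1) * c (i-1) else 0)"
    proof (cases "2 \<le> i")
      case True
      then have "i-1 \<in> {1..n}" using assms by auto
      then show ?thesis using True by (simp add: sum.delta')
    qed simp
    show ?thesis using a b by simp
  qed
  finally show ?thesis .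
qed

lemma alt0: "alt_sq_sum c 0 = 0"
proof -
  have "{i::nat. 1 \<le> i \<and> i \<le> 0 \<and> i mod 2 = 0 mod 2} = {}" by auto
  then show ?thesis unfolding alt_sq_sum_def by (simp only: sum.empty)
qed

lemma alt_step: "alt_sq_sum c (k+2) = alt_sq_sum c k + (c (k+2))^2"
proof -
  have "{i. 1 \<le> i \<and> i \<le> k+2 \<and> i mod 2 = (k+2) mod 2} =
        insert (k+2) {i. 1 \<le> i \<and> i \<le> k \<and> i mod 2 = k mod 2}"
    by auto presburger+
  moreover have "finite {i. 1 \<le> i \<and> i \<le> k \<and> i mod 2 = k mod 2}" by simp
  ultimately show ?thesis unfolding alt_sq_sum_def by simp
qed

lemma alt1: "alt_sq_sum c 1 = (c 1)^2"
proof -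
  have "{i::nat. 1 \<le> i \<and> i \<le> 1 \<and> i mod 2 = 1 mod 2} = {1}" by auto
  then show ?thesis unfolding alt_sq_sum_def by simp
qed

theorem mainTheorem5:
  fixes n :: nat and c :: "nat \<Rightarrow> real" and \<rho> :: real
  assumes "n \<ge> 2"
    and "\<And>i. 1 \<le> i \<Longrightarrow> i \<le> n \<Longrightarrow> c i > 0"
    and "\<rho> > 0"
  shows "(\<exists>w :: nat \<Rightarrow> real. (\<forall>i. 1 \<le> i \<and> i < n \<longrightarrow> w i > 0) \<and>
            (\<forall>i. 1 \<le> i \<and> i \<le> n \<longrightarrow>
               (\<Sum>j = 1..n. path_adj n w i j * c j) = \<rho> * c i))
         \<longleftrightarrow> ((\<forall>k. 1 \<le> k \<and> k < n - 1 \<longrightarrow> alt_sq_sum c k < alt_sq_sum c (k + 1))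
              \<and> alt_sq_sum c (n - 1) = alt_sq_sum c n)"
  (is "?L \<longleftrightarrow> ?R")
proof
  let ?s = "alt_sq_sum c"
  assume ?L
  then obtain w where wpos: "\<forall>i. 1 \<le> i \<and> i < n \<longrightarrow> w i > 0"
    and eq: "\<forall>i. 1 \<le> i \<and> i \<le> n \<longrightarrow> (\<Sum>j = 1..n. path_adj n w i j * c j) = \<rho> * c i"
    by blast
  have row: "(if i < n then w i * c (i+1) else 0) + (if 2 \<le> i then w (i-1) * c (i-1) else 0) = \<rho> * c i"
    if "1 \<le> i" "i \<le> n" for i
    using eq row_sum[OF that, of w c] that by simp
  have key: "w i * c i * c (i+1) = \<rho> * (?s i - ?s (i-1))" if "1 \<le> i" "i < n" for i
    using that
  proof (induction i rule: nat_induct_at_least)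
    case base
    have "w 1 * c 2 = \<rho> * c 1" using row[of 1] assms(1) by (simp add: numeral_2_eq_2)
    then have "w 1 * c 1 * c 2 = \<rho> * (c 1)^2"
      by (metis mult.assoc mult.commute power2_eq_square)
    then have "w 1 * c 1 * c (1+1) = \<rho> * (c 1)^2"
      by (simp only: one_add_one)
    then show ?case using alt0 alt1 by simp
  next
    case (Suc i)
    have r: "w (i+1) * c (i+2) + w i * c i = \<rho> * c (i+1)"
      using row[of "i+1"] Suc by simp
    have "w (i+1) * c (i+1) * c (i+2) + w i * c i * c (i+1) = \<rho> * (c (i+1))^2"
      using arg_cong[OF r, of "\<lambda>x. x * c (i+1)"]
      by (simp add: power2_eq_square algebra_simps)
    moreover have "w i * c i * c (i+1) = \<rho> * (?s i - ?s (i-1))" using Suc by simp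
    moreover have "?s (i+1) = ?s (i-1) + (c (i+1))^2"
      using alt_step[of c "i-1"] Suc by simp
    ultimately show ?case by (simp add: algebra_simps)
  qed
  have inc: "?s (i-1) < ?s i" if "1 \<le> i" "i < n" for i
  proof -
    have "w i * c i * c (i+1) > 0" using wpos assms(2) that by simp
    then show ?thesis using key[OF that] assms(3)
      by (smt (verit) mult_pos_pos mult_nonneg_nonpos)
  qed
  have part1: "\<forall>k. 1 \<le> k \<and> k < n - 1 \<longrightarrow> ?s k < ?s (k + 1)"
    using inc by (metis Suc_eq_plus1 diff_Suc_1 le_add2 less_diff_conv)
  have last: "w (n-1) * c (n-1) = \<rho> * c n"
    using row[of n] assms(1) by simp
  then have "w (n-1) * c (n-1) * c (n-1+1) = \<rho> * (c n)^2"
    using assms(1) by (simp add: power2_eq_square algebra_simps)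
  moreover have "1 \<le> n-1" "n-1 < n" using assms(1) by auto
  ultimately have "\<rho> * (?s (n-1) - ?s (n-1-1)) = \<rho> * (c n)^2"
    using key by metis
  moreover have "n-1-1 = n-2" by simp
  ultimately have "?s (n-1) - ?s (n-2) = (c n)^2" using assms(3)
    by simp
  moreover have "?s n = ?s (n-2) + (c n)^2"
    using alt_step[of c "n-2"] assms(1) by (metis le_add_diff_inverse2)
  ultimately show ?R using part1 by simp
next
  let ?s = "alt_sq_sum c"
  assume R: ?R
  define w where "w i = \<rho> * (?s i - ?s (i-1)) / (c i * c (i+1))" for i
  have inc: "?s (i-1) < ?s i" if "1 \<le> i" "i < n" for i
  proof (cases "i = 1")
    case True
    then show ?thesis using alt0 alt1 assms(2)[of 1] assms(1) by simp
  next
    case False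
    then show ?thesis using R that
      by (metis Nat.add_diff_assoc2 Nat.le_diff_conv2 add_diff_cancel_right' diff_le_self
          le_trans less_diff_conv2 less_one linorder_not_le nat_le_linear one_le_numeral)
  qed
  have wpos: "\<forall>i. 1 \<le> i \<and> i < n \<longrightarrow> w i > 0"
  proof (intro allI impI)
    fix i assume i: "1 \<le> i \<and> i < n"
    then have "c i > 0" "c (i+1) > 0" using assms(2) by auto
    then show "w i > 0" unfolding w_def using inc[of i] i assms(3) by simp
  qed
  have wc1: "w i * c (i+1) = \<rho> * (?s i - ?s (i-1)) / c i" if "1 \<le> i" "i < n" for i
  proof -
    have "c i > 0" "c (i+1) > 0" using assms(2) that by auto
    then show ?thesis unfolding w_def by (simp add: field_simps)
  qed
  have wc2: "w (i-1) * c (i-1) = \<rho> * (?s (i-1) - ?s (i-2)) / c i" if "2 \<le> i" "i \<le> n" for i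
  proof -
    have "c (i-1) > 0" "c i > 0" using assms(2) that by auto
    moreover have "i - 1 + 1 = i" "i - 1 - 1 = i - 2" using that by auto
    ultimately show ?thesis unfolding w_def by (simp add: field_simps)
  qed
  have "\<forall>i. 1 \<le> i \<and> i \<le> n \<longrightarrow> (\<Sum>j = 1..n. path_adj n w i j * c j) = \<rho> * c i"
  proof (intro allI impI)
    fix i assume i: "1 \<le> i \<and> i \<le> n"
    have ci: "c i > 0" using assms(2) i by auto
    have st: "?s i = ?s (i-2) + (c i)^2" if "2 \<le> i"
      using alt_step[of c "i-2"] that by (metis le_add_diff_inverse2)
    have "(if i < n then w i * c (i+1) else 0) + (if 2 \<le> i then w (i-1) * c (i-1) else 0) = \<rho> * c i"
    proof (cases "i = 1")
      case True
      then show ?thesis using wc1[of 1] assms(1) alt0 alt1 ci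
        by (simp add: power2_eq_square)
    next
      case False
      then have i2: "2 \<le> i" using i by auto
      show ?thesis
      proof (cases "i < n")
        case True
        have "w i * c (i+1) + w (i-1) * c (i-1) =
            (\<rho> * (?s i - ?s (i-1)) + \<rho> * (?s (i-1) - ?s (i-2))) / c i"
          using wc1[of i] wc2[of i] i i2 True by (simp only: add_divide_distrib)
        also have "\<dots> = \<rho> * (?s i - ?s (i-2)) / c i" by (simp add: algebra_simps)
        finally have "w i * c (i+1) + w (i-1) * c (i-1) = \<rho> * (?s i - ?s (i-2)) / c i" .
        also have "\<dots> = \<rho> * c i" using st[OF i2] ci by (simp add: power2_eq_square)
        finally show ?thesis using True i2 by simp
      next
        case False
        then have "i = n" using i by simp
        have "?s (n-1) = ?s n" using R by simp
        then have "w (i-1) * c (i-1) = \<rho> * (?s i - ?s (i-2)) / c i"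
          using wc2[of i] i i2 \<open>i = n\<close> by simp
        also have "\<dots> = \<rho> * c i" using st[OF i2] ci by (simp add: power2_eq_square)
        finally show ?thesis using False i2 by simp
      qed
    qed
    then show "(\<Sum>j = 1..n. path_adj n w i j * c j) = \<rho> * c i"
      using row_sum[of i n w c] i by simp
  qed
  then show ?L using wpos by blast
qed

end
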